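(* (A weighted, repeated argument, double, less-than sum simplification.) For complex variables $x_0,\dots,x_q$, $q\ge0$, and $\tau\in\mathbb{R}$, $$\sum_{\substack{i,j=0\\ i\le j}}^{q}x_i\,e^{-\tau[x_0,\ldots,x_q,x_i,x_j]}=\Big(-\frac{\tau^2}{2}\frac{\partial}{\partial\tau}-\sum_{i=0}^{q}i\,\frac{\partial}{\partial x_i}\Big)e^{-\tau[x_0,\ldots,x_q]}.$$
   Context: For $t\in\mathbb{R}$ and numbers $y_0,\dots,y_p$ (repetitions allowed), $e^{t[y_0,\ldots,y_p]}$ denotes the divided difference of $f(x)=e^{tx}$, $f[y_0,\ldots,y_p]=\frac{1}{2\pi i}\oint_\Gamma\frac{f(x)}{\prod_{i=0}^p(x-y_i)}\,\mathrm{d}x$, $\Gamma$ a positively oriented contour enclosing all $y_i$; it is a smooth (indeed analytic) function of $t$ and of the $y_i$. The multiset $[x_0,\ldots,x_q,x_i,x_j]$ consists of $x_0,\ldots,x_q$ plus extra copies of $x_i$ and $x_j$. *)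

theory Defs
  imports "HOL-Complex_Analysis.Complex_Analysis"
begin

text \<open>Divided difference of f(x) = exp(t x) on the node multiset ys (a list, repetitions
allowed), defined via the contour integral
  (1 / (2 pi i)) \<ointegral>_\<Gamma> exp(t x) / \<Prod>(x - y_i) dx
with \<Gamma> the positively oriented circle about 0 of radius 1 + \<Sum>|y_i|, which encloses all nodes.\<close>

definition dd_radius :: "complex list \<Rightarrow> real" where
  "dd_radius ys = 1 + (\<Sum>y\<leftarrow>ys. norm y)"

definition exp_dd :: "complex \<Rightarrow> complex list \<Rightarrow> complex" where
  "exp_dd t ys = contour_integral (circlepath 0 (dd_radius ys))
      (\<lambda>x. exp (t * x) / (\<Prod>y\<leftarrow>ys. (x - y))) / (2 * pi * \<i>)"

end

theory Submission
  imports Defs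
begin

lemma prodl_nth: "(\<Prod>y\<leftarrow>ys. f y) = (\<Prod>k<length ys. f (ys ! k))"
proof (induction ys)
  case Nil then show ?case by simp
next
  case (Cons a ys) then show ?case by (simp add: prod.lessThan_Suc_shift del: prod.lessThan_Suc)
qed

lemma circ_indep:
  fixes \<phi> :: "complex \<Rightarrow> complex"
  assumes hol: "\<phi> holomorphic_on {x. M < norm x}" and r: "M < r1" "M < r2" "0 \<le> M"
  shows "contour_integral (circlepath 0 r1) \<phi> = contour_integral (circlepath 0 r2) \<phi>"
proof (rule Cauchy_theorem_homotopic_loops[OF _ _ hol])
  show "open {x::complex. M < norm x}"
    by (intro open_Collect_less continuous_intros)
  show "homotopic_loops {x. M < cmod x} (circlepath 0 r1) (circlepath 0 r2)"
  proof (rule homotopic_loops_linear)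
    fix t :: real and w assume t: "t \<in> {0..1}"
    show "closed_segment (circlepath 0 r1 t) (circlepath 0 r2 t) \<subseteq> {x. M < cmod x}"
    proof
      fix w assume "w \<in> closed_segment (circlepath 0 r1 t) (circlepath 0 r2 t)"
      then obtain u where u: "0 \<le> u" "u \<le> 1" and w: "w = (1 - u) *\<^sub>R (circlepath 0 r1 t) + u *\<^sub>R (circlepath 0 r2 t)"
        unfolding closed_segment_def by auto
      define e where "e = exp (2 * of_real pi * \<i> * of_real t)"
      have ne: "norm e = 1" unfolding e_def by (simp add: norm_exp_eq_Re)
      have "w = of_real ((1 - u) * r1 + u * r2) * e"
        unfolding w circlepath e_def by (simp add: scaleR_conv_of_real algebra_simps)
      hence nw: "norm w = \<bar>(1 - u) * r1 + u * r2\<bar>" by (simp only: norm_mult ne norm_of_real mult_1_right)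
      have "(1 - u) * M + u * M < (1 - u) * r1 + u * r2"
      proof (cases "u = 0")
        case True then show ?thesis using r by simp
      next
        case False
        then have "u > 0" using u by simp
        have "(1 - u) * M \<le> (1 - u) * r1" using u r by (intro mult_left_mono) auto
        moreover have "u * M < u * r2" using \<open>u>0\<close> r by simp
        ultimately show ?thesis by linarith
      qed
      then show "w \<in> {x. M < cmod x}" using nw by (simp add: algebra_simps)
    qed
  qed (auto simp: pathfinish_def pathstart_def circlepath simp del: path_circlepath intro: path_circlepath[of 0, unfolded circlepath, simplified])
qed auto

lemma norm_lt_dd_radius: "y \<in> set ys \<Longrightarrow> norm y < dd_radius ys"
proof -
  assume "y \<in> set ys"
  then have "norm y \<le> (\<Sum>y\<leftarrow>ys. norm y)"
    by (intro member_le_sum_list) auto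
  then show ?thesis unfolding dd_radius_def by simp
qed

lemma exp_dd_circ:
  assumes ys: "\<forall>y\<in>set ys. norm y < r" and r: "0 < r"
  shows "exp_dd t ys = contour_integral (circlepath 0 r)
           (\<lambda>x. exp (t * x) / (\<Prod>k<length ys. (x - ys ! k))) / (2 * pi * \<i>)"
proof -
  define M where "M = Max (insert 0 (norm ` set ys))"
  have fin: "finite (insert 0 (norm ` set ys))" by simp
  have M0: "0 \<le> M" unfolding M_def by (simp add: Max_ge_iff)
  have Mge: "norm y \<le> M" if "y \<in> set ys" for y
    unfolding M_def using that by (simp add: Max_ge_iff)
  have Mr: "M < r" unfolding M_def using ys r by (simp add: Max_less_iff)
  have Md: "M < dd_radius ys" unfolding M_def
    using norm_lt_dd_radius[of _ ys] by (simp add: Max_less_iff dd_radius_def, smt (verit) norm_ge_zero sum_list_nonneg ex_map_conv)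
  have hol: "(\<lambda>x. exp (t * x) / (\<Prod>k<length ys. (x - ys ! k))) holomorphic_on {x. M < norm x}"
  proof (intro holomorphic_intros)
    fix x :: complex assume x: "x \<in> {x. M < norm x}"
    show "(\<Prod>k<length ys. (x - ys ! k)) \<noteq> 0"
    proof
      assume "(\<Prod>k<length ys. (x - ys ! k)) = 0"
      then obtain k where k: "k < length ys" "x = ys ! k" by auto
      then have "norm x \<le> M" using Mge nth_mem by blast
      then show False using x by simp
    qed
  qed
  show ?thesis unfolding exp_dd_def prodl_nth
    using circ_indep[OF hol Md Mr M0] by simp
qed

lemma norm_circlepath0: "0 \<le> R \<Longrightarrow> norm (circlepath 0 R t) = R"
  by (simp add: circlepath norm_mult norm_exp_eq_Re)

lemma cont_circlepath: "continuous_on A (circlepath 0 R)"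
  unfolding circlepath by (intro continuous_intros)

lemma circ_deriv:
  fixes F F' :: "complex \<Rightarrow> complex \<Rightarrow> complex"
  assumes U: "open U" "convex U" "w0 \<in> U" and R: "0 < R"
  and d: "\<And>w x. w \<in> U \<Longrightarrow> norm x = R \<Longrightarrow> ((\<lambda>w. F w x) has_field_derivative F' w x) (at w)"
  and c': "continuous_on (U \<times> sphere 0 R) (\<lambda>(w,x). F' w x)"
  and c: "\<And>w. w \<in> U \<Longrightarrow> continuous_on (sphere 0 R) (F w)"
  shows "((\<lambda>w. contour_integral (circlepath 0 R) (F w)) has_field_derivative
           contour_integral (circlepath 0 R) (F' w0)) (at w0)"
proof -
  define \<gamma> where "\<gamma> = circlepath 0 R"
  define dg where "dg = (\<lambda>t::real. 2 * pi * \<i> * R * exp(2 * of_real pi * \<i> * t))"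
  have ng: "norm (\<gamma> t) = R" for t unfolding \<gamma>_def using R norm_circlepath0 by simp
  have cg: "continuous_on A \<gamma>" for A unfolding \<gamma>_def by (rule cont_circlepath)
  have cdg: "continuous_on A dg" for A unfolding dg_def by (intro continuous_intros)
  have eq: "contour_integral \<gamma> G = integral (cbox 0 1) (\<lambda>t. G (\<gamma> t) * dg t)" for G
    unfolding contour_integral_integral \<gamma>_def dg_def vector_derivative_circlepath by simp
  have "((\<lambda>w. integral (cbox 0 1) (\<lambda>t. F w (\<gamma> t) * dg t)) has_field_derivative
          integral (cbox 0 1) (\<lambda>t. F' w0 (\<gamma> t) * dg t)) (at w0 within U)"
  proof (rule leibniz_rule_field_derivative[OF _ _ _ U(3,2)])
    fix w t assume w: "w \<in> U"
    show "((\<lambda>w. F w (\<gamma> t) * dg t) has_field_derivative F' w (\<gamma> t) * dg t) (at w within U)"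
      by (rule has_field_derivative_at_within[OF DERIV_cmult_right[OF d[OF w ng]]])
  next
    fix w assume w: "w \<in> U"
    have "continuous_on (cbox 0 1) (\<lambda>t. F w (\<gamma> t) * dg t)"
      by (intro continuous_intros continuous_on_compose2[OF c[OF w] cg] cdg) (auto simp: ng)
    then show "(\<lambda>t. F w (\<gamma> t) * dg t) integrable_on cbox 0 1"
      by (rule integrable_continuous)
  next
    have "continuous_on (U \<times> cbox 0 1) (\<lambda>p. (\<lambda>(w,x). F' w x) (fst p, \<gamma> (snd p)))"
      by (intro continuous_on_compose2[OF c'] continuous_intros continuous_on_compose2[OF cg])
         (auto simp: ng)
    then have "continuous_on (U \<times> cbox 0 1) (\<lambda>p. F' (fst p) (\<gamma> (snd p)) * dg (snd p))"
      by (intro continuous_intros continuous_on_compose2[OF cdg]) auto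
    then show "continuous_on (U \<times> cbox 0 1) (\<lambda>(w, t). F' w (\<gamma> t) * dg t)"
      by (simp add: case_prod_beta')
  qed
  then show ?thesis unfolding \<gamma>_def[symmetric] eq using at_within_open[OF U(3,1)] by simp
qed

lemma dsum_sq:
  fixes a :: "nat \<Rightarrow> complex"
  shows "(\<Sum>i<n. \<Sum>j\<in>{i..<n}. a i * a j) = ((\<Sum>i<n. a i)^2 + (\<Sum>i<n. (a i)^2)) / 2"
proof (induction n)
  case 0 then show ?case by simp
next
  case (Suc n)
  have "(\<Sum>i<Suc n. \<Sum>j\<in>{i..<Suc n}. a i * a j)
      = (\<Sum>i<n. \<Sum>j\<in>{i..<Suc n}. a i * a j) + a n * a n" by simp
  also have "(\<Sum>i<n. \<Sum>j\<in>{i..<Suc n}. a i * a j) = (\<Sum>i<n. (\<Sum>j\<in>{i..<n}. a i * a j) + a i * a n)"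
    by (intro sum.cong refl) simp
  also have "\<dots> = (\<Sum>i<n. \<Sum>j\<in>{i..<n}. a i * a j) + (\<Sum>i<n. a i) * a n"
    by (simp add: sum.distrib sum_distrib_right)
  finally show ?case using Suc by (simp add: power2_eq_square field_simps)
qed

lemma dsum_lin:
  fixes a :: "nat \<Rightarrow> complex"
  shows "(\<Sum>i<n. \<Sum>j\<in>{i..<n}. a j) = (\<Sum>j<n. (of_nat j + 1) * a j)"
proof (induction n)
  case 0 then show ?case by simp
next
  case (Suc n)
  have "(\<Sum>i<Suc n. \<Sum>j\<in>{i..<Suc n}. a j) = (\<Sum>i<n. \<Sum>j\<in>{i..<Suc n}. a j) + a n" by simp
  also have "(\<Sum>i<n. \<Sum>j\<in>{i..<Suc n}. a j) = (\<Sum>i<n. (\<Sum>j\<in>{i..<n}. a j) + a n)"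
    by (intro sum.cong refl) simp
  also have "\<dots> = (\<Sum>i<n. \<Sum>j\<in>{i..<n}. a j) + of_nat n * a n"
    by (simp add: sum.distrib)
  finally show ?case using Suc by (simp add: field_simps)
qed

lemma key_deriv:
  fixes X :: "nat \<Rightarrow> complex" and \<tau> x :: complex
  assumes x: "\<forall>k<n. x \<noteq> X k"
  shows "((\<lambda>x. exp (-\<tau> * x) * ((\<tau> * x + 1 - x * (\<Sum>k<n. 1 / (x - X k))) / 2) / (\<Prod>k<n. (x - X k)))
     has_field_derivative
     ((\<Sum>i<n. \<Sum>j\<in>{i..<n}. X i * (exp (-\<tau> * x) / ((\<Prod>k<n. (x - X k)) * (x - X i) * (x - X j))))
      - (\<tau>^2 / 2) * (x * exp (-\<tau> * x) / (\<Prod>k<n. (x - X k)))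
      + (\<Sum>i<n. of_nat i * (exp (-\<tau> * x) / (\<Prod>k<n. (x - X k)) / (x - X i))))) (at x)"
proof -
  define P where "P = (\<lambda>x. \<Prod>k<n. (x - X k))"
  define A where "A = (\<lambda>x. \<Sum>k<n. 1 / (x - X k))"
  define a where "a = (\<lambda>k. 1 / (x - X k))"
  define B where "B = (\<Sum>k<n. (a k)^2)"
  define E where "E = exp (-\<tau> * x) / P x"
  have xk: "x - X k \<noteq> 0" if "k < n" for k using x that by auto
  have P0: "P x \<noteq> 0" unfolding P_def using xk by auto
  have hP: "(P has_field_derivative P x * A x) (at x)"
  proof -
    have d1: "((\<lambda>u. u - X k) has_field_derivative 1) (at x)" for k
      by (auto intro!: derivative_eq_intros)
    show ?thesis
      using has_field_derivative_prod'[of "{..<n}" "\<lambda>k u. u - X k" x "\<lambda>_. 1"] xk d1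
      unfolding P_def A_def by simp
  qed
  have hA: "(A has_field_derivative - B) (at x)"
    unfolding A_def B_def a_def
    by (rule derivative_eq_intros refl | use xk in force)+
       (subst sum_negf[symmetric], intro sum.cong refl, use xk in \<open>auto simp: divide_simps power2_eq_square\<close>)
  have D: "((\<lambda>x. exp (-\<tau> * x) * ((\<tau> * x + 1 - x * A x) / 2) / P x) has_field_derivative
          E * (x * ((A x)^2 + B) / 2 - A x - \<tau>^2 * x / 2)) (at x)"
    unfolding E_def
    by (rule derivative_eq_intros hA hP refl | use P0 in force)+
       (use P0 in \<open>simp add: field_simps power2_eq_square\<close>)
  have e1: "X i * (exp (-\<tau> * x) / (P x * (x - X i) * (x - X j))) = E * ((x * a i - 1) * a j)"
    if "i < n" "j < n" for i j
    unfolding E_def a_def using xk[OF that(1)] xk[OF that(2)] P0 by (simp add: field_simps)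
  have "(\<Sum>i<n. \<Sum>j\<in>{i..<n}. X i * (exp (-\<tau> * x) / (P x * (x - X i) * (x - X j))))
      = (\<Sum>i<n. \<Sum>j\<in>{i..<n}. E * (x * (a i * a j) - a j))"
    by (intro sum.cong refl, subst e1) (auto simp: algebra_simps)
  also have "\<dots> = E * (x * (\<Sum>i<n. \<Sum>j\<in>{i..<n}. a i * a j) - (\<Sum>i<n. \<Sum>j\<in>{i..<n}. a j))"
    by (simp add: sum_distrib_left sum_subtractf right_diff_distrib mult.assoc)
  also have "\<dots> = E * (x * (((A x)^2 + B) / 2) - (\<Sum>j<n. of_nat j * a j) - A x)"
    unfolding dsum_sq dsum_lin B_def A_def a_def by (simp add: distrib_right sum.distrib add_divide_distrib)
  finally have s1: "(\<Sum>i<n. \<Sum>j\<in>{i..<n}. X i * (exp (-\<tau> * x) / (P x * (x - X i) * (x - X j))))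
      = E * (x * (((A x)^2 + B) / 2) - (\<Sum>j<n. of_nat j * a j) - A x)" .
  have s2: "(\<Sum>i<n. of_nat i * (exp (-\<tau> * x) / P x / (x - X i))) = E * (\<Sum>j<n. of_nat j * a j)"
    unfolding E_def a_def by (simp add: sum_distrib_left field_simps)
  have "((\<lambda>x. exp (-\<tau> * x) * ((\<tau> * x + 1 - x * A x) / 2) / P x)
     has_field_derivative
     ((\<Sum>i<n. \<Sum>j\<in>{i..<n}. X i * (exp (-\<tau> * x) / (P x * (x - X i) * (x - X j))))
      - (\<tau>^2 / 2) * (x * exp (-\<tau> * x) / P x)
      + (\<Sum>i<n. of_nat i * (exp (-\<tau> * x) / P x / (x - X i))))) (at x)"
    using D unfolding s1 s2
    by (rule DERIV_cong) (use P0 in \<open>simp add: E_def field_simps\<close>)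
  then show ?thesis by (simp add: P_def A_def)
qed

lemma prod_app2: "(\<Prod>k<length (ys @ [a, b]). (x - (ys @ [a, b]) ! k)) = (\<Prod>k<length ys. (x - ys ! k)) * (x - a) * (x - b)"
proof -
  have "(\<Prod>k<length (ys @ [a, b]). (x - (ys @ [a, b]) ! k)) = (\<Prod>y\<leftarrow>ys @ [a, b]. x - y)"
    by (rule prodl_nth[symmetric])
  also have "\<dots> = (\<Prod>y\<leftarrow>ys. x - y) * (x - a) * (x - b)" by (simp add: mult.assoc)
  also have "(\<Prod>y\<leftarrow>ys. x - y) = (\<Prod>k<length ys. (x - ys ! k))" by (rule prodl_nth)
  finally show ?thesis .
qed

lemma prod_upd: assumes "i < length ys"
  shows "(\<Prod>k<length (ys[i := z]). (x - ys[i := z] ! k)) = (x - z) * (\<Prod>k\<in>{..<length ys} - {i}. (x - ys ! k))"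
proof -
  have "(\<Prod>k<length (ys[i := z]). (x - ys[i := z] ! k)) = (x - ys[i := z] ! i) * (\<Prod>k\<in>{..<length ys} - {i}. (x - ys[i := z] ! k))"
    using assms by (simp add: prod.remove)
  also have "(\<Prod>k\<in>{..<length ys} - {i}. (x - ys[i := z] ! k)) = (\<Prod>k\<in>{..<length ys} - {i}. (x - ys ! k))"
    by (intro prod.cong refl) auto
  finally show ?thesis using assms by simp
qed

lemma prod_rem: assumes "i < length ys"
  shows "(\<Prod>k<length ys. (x - ys ! k)) = (x - ys ! i) * (\<Prod>k\<in>{..<length ys} - {i}. (x - ys ! k))"
  using assms by (simp add: prod.remove)

theorem lemma4:
  fixes xs :: "complex list" and \<tau> :: real
  assumes "xs \<noteq> []"
  shows "(\<Sum>i<length xs. \<Sum>j\<in>{i..<length xs}.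
            xs ! i * exp_dd (- complex_of_real \<tau>) (xs @ [xs ! i, xs ! j]))
       = - (complex_of_real (\<tau>^2) / 2) *
            vector_derivative (\<lambda>s::real. exp_dd (- complex_of_real s) xs) (at \<tau>)
         - (\<Sum>i<length xs. of_nat i *
            deriv (\<lambda>z. exp_dd (- complex_of_real \<tau>) (xs[i := z])) (xs ! i))"
proof -
  define n where "n = length xs"
  define t where "t = - complex_of_real \<tau>"
  define D0 where "D0 = dd_radius xs"
  define R where "R = D0 + 1"
  define \<Gamma> where "\<Gamma> = circlepath 0 R"
  define c where "c = 2 * pi * \<i>"
  define P where "P = (\<lambda>x. \<Prod>k<n. (x - xs ! k))"
  have nX: "norm (xs ! k) < D0" if "k < n" for k
    unfolding D0_def n_def using that by (intro norm_lt_dd_radius) (auto simp: n_def)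
  have D0pos: "0 \<le> D0" using nX[of 0] assms unfolding n_def by (metis length_greater_0_conv norm_ge_zero order.strict_trans1 less_imp_le)
  have R0: "0 < R" unfolding R_def using D0pos by simp
  have neq: "x \<noteq> xs ! k" if "norm x = R" "k < n" for x k
    using nX[OF that(2)] that(1) unfolding R_def by auto
  have P0: "P x \<noteq> 0" if "norm x = R" for x
    unfolding P_def using neq[OF that] by auto
  have contP: "continuous_on S P" for S unfolding P_def by (intro continuous_intros)
  have int: "\<phi> contour_integrable_on \<Gamma>" if "continuous_on (sphere 0 R) \<phi>" for \<phi>
    unfolding \<Gamma>_def using that R0 by (intro contour_integrable_continuous_circlepath) simp

  define G where "G = (\<lambda>i j x. exp (t * x) / (P x * (x - xs ! i) * (x - xs ! j)))"
  define J where "J = (\<lambda>x. x * exp (t * x) / P x)"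
  define K where "K = (\<lambda>i x. exp (t * x) / P x / (x - xs ! i))"

  have F1: "exp_dd t (xs @ [xs ! i, xs ! j]) = contour_integral \<Gamma> (G i j) / c" if "i < n" "j < n" for i j
  proof -
    have "\<forall>y\<in>set (xs @ [xs ! i, xs ! j]). norm y < R"
      using that nX unfolding R_def by (force simp: in_set_conv_nth n_def intro: less_trans)
    from exp_dd_circ[OF this R0, of t] show ?thesis
      unfolding prod_app2 \<Gamma>_def c_def G_def P_def n_def .
  qed

  have C: "exp_dd w xs = contour_integral \<Gamma> (\<lambda>x. exp (w * x) / P x) / c" for w
  proof -
    have "\<forall>y\<in>set xs. norm y < R"
      using nX unfolding R_def by (force simp: in_set_conv_nth n_def intro: less_trans)
    from exp_dd_circ[OF this R0, of w] show ?thesis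
      unfolding \<Gamma>_def c_def P_def n_def .
  qed
  have dC: "((\<lambda>w. contour_integral \<Gamma> (\<lambda>x. exp (w * x) / P x)) has_field_derivative
              contour_integral \<Gamma> (\<lambda>x. x * exp (w0 * x) / P x)) (at w0)" for w0
    unfolding \<Gamma>_def
  proof (rule circ_deriv[where U=UNIV, OF open_UNIV convex_UNIV UNIV_I R0])
    fix w and x :: complex assume "norm x = R"
    then have "P x \<noteq> 0" by (rule P0)
    then show "((\<lambda>w. exp (w * x) / P x) has_field_derivative x * exp (w * x) / P x) (at w)"
      by (auto intro!: derivative_eq_intros)
  next
    have "continuous_on (UNIV \<times> sphere 0 R) (\<lambda>p. snd p * exp (fst p * snd p) / P (snd p))"
      using P0 by (intro continuous_intros continuous_on_compose2[OF contP]) auto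
    then show "continuous_on (UNIV \<times> sphere 0 R) (\<lambda>(w, x). x * exp (w * x) / P x)"
      by (simp add: case_prod_beta')
  next
    fix w show "continuous_on (sphere 0 R) (\<lambda>x. exp (w * x) / P x)"
      using P0 by (intro continuous_intros contP) auto
  qed
  have F2: "vector_derivative (\<lambda>s::real. exp_dd (- complex_of_real s) xs) (at \<tau>)
      = - (contour_integral \<Gamma> J / c)"
  proof -
    have f: "((\<lambda>s::real. - complex_of_real s) has_vector_derivative -1) (at \<tau>)"
      by (auto intro!: derivative_eq_intros)
    have g: "((\<lambda>w. contour_integral \<Gamma> (\<lambda>x. exp (w * x) / P x) / c) has_field_derivative
              contour_integral \<Gamma> J / c) (at ((\<lambda>s::real. - complex_of_real s) \<tau>))"
      unfolding J_def t_def by (intro DERIV_cdivide dC)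
    have "((\<lambda>s::real. exp_dd (- complex_of_real s) xs) has_vector_derivative (-1 * (contour_integral \<Gamma> J / c))) (at \<tau>)"
      using field_vector_diff_chain_at[OF f g] unfolding C o_def .
    then show ?thesis by (simp add: vector_derivative_at)
  qed

  have F3: "deriv (\<lambda>z. exp_dd t (xs[i := z])) (xs ! i) = contour_integral \<Gamma> (K i) / c" if i: "i < n" for i
  proof -
    define Q where "Q = (\<lambda>x. \<Prod>k\<in>{..<n} - {i}. (x - xs ! k))"
    define U where "U = ball (xs ! i) 1"
    have Q0: "Q x \<noteq> 0" if "norm x = R" for x
      unfolding Q_def using neq[OF that] by auto
    have contQ: "continuous_on S Q" for S unfolding Q_def by (intro continuous_intros)
    have PQ: "P x = (x - xs ! i) * Q x" for x
      unfolding P_def Q_def n_def using prod_rem[OF i[unfolded n_def]] .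
    have zR: "norm z < R" if "z \<in> U" for z
    proof -
      have "norm z \<le> norm (xs ! i) + dist (xs ! i) z"
        by (metis dist_norm norm_minus_commute norm_triangle_sub add.commute)
      then show ?thesis using that nX[OF i] unfolding U_def R_def by auto
    qed
    have xz: "x \<noteq> z" if "norm x = R" "z \<in> U" for x z using zR[OF that(2)] that(1) by auto
    have loc: "exp_dd t (xs[i := z]) = contour_integral \<Gamma> (\<lambda>x. exp (t * x) / ((x - z) * Q x)) / c"
      if z: "z \<in> U" for z
    proof -
      have "\<forall>y\<in>set (xs[i := z]). norm y < R"
      proof
        fix y assume "y \<in> set (xs[i := z])"
        then have "y = z \<or> y \<in> set xs" using set_update_subset_insert by fastforce
        then show "norm y < R"
          using zR[OF z] nX unfolding R_def by (force simp: in_set_conv_nth n_def intro: less_trans)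
      qed
      from exp_dd_circ[OF this R0, of t] show ?thesis
        unfolding prod_upd[OF i[unfolded n_def]] \<Gamma>_def c_def Q_def n_def .
    qed
    have dH: "((\<lambda>z. contour_integral \<Gamma> (\<lambda>x. exp (t * x) / ((x - z) * Q x))) has_field_derivative
              contour_integral \<Gamma> (\<lambda>x. exp (t * x) / ((x - xs ! i)^2 * Q x))) (at (xs ! i))"
      unfolding \<Gamma>_def
    proof (rule circ_deriv[where U=U, OF _ _ _ R0])
      show "open U" "convex U" "xs ! i \<in> U" unfolding U_def by auto
    next
      fix w and x :: complex assume w: "w \<in> U" and x: "norm x = R"
      have "x - w \<noteq> 0" using xz[OF x w] by simp
      then show "((\<lambda>w. exp (t * x) / ((x - w) * Q x)) has_field_derivative exp (t * x) / ((x - w)^2 * Q x)) (at w)"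
        using Q0[OF x]
        apply -
        apply (rule derivative_eq_intros refl)+
         apply simp
        apply (simp add: divide_simps power2_eq_square)
        done
    next
      have "continuous_on (U \<times> sphere 0 R) (\<lambda>p. exp (t * snd p) / ((snd p - fst p)^2 * Q (snd p)))"
        using Q0 xz by (intro continuous_intros continuous_on_compose2[OF contQ]) auto
      then show "continuous_on (U \<times> sphere 0 R) (\<lambda>(w, x). exp (t * x) / ((x - w)^2 * Q x))"
        by (simp add: case_prod_beta')
    next
      fix w assume w: "w \<in> U"
      show "continuous_on (sphere 0 R) (\<lambda>x. exp (t * x) / ((x - w) * Q x))"
        using Q0 xz[OF _ w] by (intro continuous_intros contQ) auto
    qed
    have eqK: "contour_integral \<Gamma> (\<lambda>x. exp (t * x) / ((x - xs ! i)^2 * Q x)) = contour_integral \<Gamma> (K i)"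
    proof (rule contour_integral_cong[OF refl])
      fix x assume "x \<in> path_image \<Gamma>"
      then have x: "norm x = R" unfolding \<Gamma>_def using R0 by simp
      show "exp (t * x) / ((x - xs ! i)^2 * Q x) = K i x"
        unfolding K_def PQ by (simp add: power2_eq_square field_simps)
    qed
    have dH': "((\<lambda>z. contour_integral \<Gamma> (\<lambda>x. exp (t * x) / ((x - z) * Q x)) / c) has_field_derivative
              contour_integral \<Gamma> (K i) / c) (at (xs ! i))"
      using DERIV_cdivide[OF dH, of c] unfolding eqK .
    have "((\<lambda>z. exp_dd t (xs[i := z])) has_field_derivative contour_integral \<Gamma> (K i) / c) (at (xs ! i))"
      by (rule has_field_derivative_transform_within_open[OF dH', of U]) (auto simp: U_def loc)
    then show ?thesis by (rule DERIV_imp_deriv)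
  qed

  \<comment> \<open>F4: the combined integrand is an exact derivative\<close>
  define \<Phi> where "\<Phi> = (\<lambda>x. (\<Sum>i<n. \<Sum>j\<in>{i..<n}. xs ! i * G i j x) - ((complex_of_real \<tau>)^2 / 2) * J x
                        + (\<Sum>i<n. of_nat i * K i x))"
  define h where "h = (\<lambda>x. exp (- complex_of_real \<tau> * x) * ((complex_of_real \<tau> * x + 1 - x * (\<Sum>k<n. 1 / (x - xs ! k))) / 2) / (\<Prod>k<n. (x - xs ! k)))"
  define S where "S = {x::complex. D0 < norm x}"
  have "(\<Phi> has_contour_integral 0) \<Gamma>"
  proof (rule Cauchy_theorem_primitive[where S=S and f=h])
    fix x assume "x \<in> S"
    then have "\<forall>k<n. x \<noteq> xs ! k" unfolding S_def using nX by force
    from key_deriv[OF this, of "complex_of_real \<tau>"]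
    show "(h has_field_derivative \<Phi> x) (at x within S)"
      unfolding h_def \<Phi>_def G_def J_def K_def P_def t_def
      by (rule has_field_derivative_at_within)
  next
    show "valid_path \<Gamma>" unfolding \<Gamma>_def by simp
    show "path_image \<Gamma> \<subseteq> S" unfolding \<Gamma>_def S_def R_def using D0pos by auto
    show "pathfinish \<Gamma> = pathstart \<Gamma>" unfolding \<Gamma>_def by simp
  qed
  moreover
  have cG: "continuous_on (sphere 0 R) (G i j)" if "i < n" "j < n" for i j
    unfolding G_def using P0 neq that by (intro continuous_intros contP) auto
  have cJ: "continuous_on (sphere 0 R) J"
    unfolding J_def using P0 by (intro continuous_intros contP) auto
  have cK: "continuous_on (sphere 0 R) (K i)" if "i < n" for i
    unfolding K_def using P0 neq that by (intro continuous_intros contP) auto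
  define V where "V = (\<Sum>i<n. \<Sum>j\<in>{i..<n}. xs ! i * contour_integral \<Gamma> (G i j))
      - ((complex_of_real \<tau>)^2 / 2) * contour_integral \<Gamma> J + (\<Sum>i<n. of_nat i * contour_integral \<Gamma> (K i))"
  have "(\<Phi> has_contour_integral V) \<Gamma>"
    unfolding \<Phi>_def V_def
    by (intro has_contour_integral_add has_contour_integral_diff has_contour_integral_sum
          has_contour_integral_lmul has_contour_integral_integral int cG cJ cK finite_lessThan finite_atLeastLessThan)
       auto
  ultimately have V0: "V = 0" using has_contour_integral_unique by metis
  have c0: "c \<noteq> 0" unfolding c_def by simp
  have L: "(\<Sum>i<length xs. \<Sum>j\<in>{i..<length xs}. xs ! i * exp_dd t (xs @ [xs ! i, xs ! j]))
      = (\<Sum>i<n. \<Sum>j\<in>{i..<n}. xs ! i * contour_integral \<Gamma> (G i j)) / c"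
    unfolding n_def[symmetric] sum_divide_distrib
    by (intro sum.cong refl) (simp add: F1)
  have Rk: "(\<Sum>i<length xs. of_nat i * deriv (\<lambda>z. exp_dd t (xs[i := z])) (xs ! i))
      = (\<Sum>i<n. of_nat i * contour_integral \<Gamma> (K i)) / c"
    unfolding n_def[symmetric] sum_divide_distrib
    by (intro sum.cong refl) (simp add: F3)
  show ?thesis
    unfolding t_def[symmetric] L Rk F2 of_real_power
    using V0 c0 unfolding V_def by (simp add: field_simps)
qed

end
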